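(* Let the pumping $A_p:\mathbb R\to\mathbb R$ be continuous and $T$-periodic. Consider the Maxwell--Bloch system on $\mathbb X=\mathbb R^2\times S^3$, \[ \dot A=B,\quad \dot B=-\Omega^2A-\sigma B+cj,\quad i\hbar\dot C_1=\hbar\omega_1C_1+iaC_2,\quad i\hbar\dot C_2=\hbar\omega_2C_2-iaC_1, \] with $j=2q\,\mathrm{Im}[\overline{C_1}C_2]$, $a(t)=\frac qc[A(t)+A_p(t)]$, its reduced dynamics $\dot Y=F(Y,t)$ on $\mathbb Y=\mathbb R^2\times S^2$, and let $U(t):\mathbb Y\to\mathbb Y$ be the map sending $Y(0)$ to $Y(t)$ for solutions of the reduced dynamics. Then the set $\Phi=\{Y_\#\in\mathbb Y: U(T)Y_\#=Y_\#\}$ of fixed points of the Poincaré map $U(T)$ is bounded in $\mathbb Y$.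
   Context: Parameters: $\Omega,\sigma,c,\hbar,p>0$, real $\omega_2>\omega_1$, $\omega=\omega_2-\omega_1$, $q=\omega p$. $S^3=\{C=(C_1,C_2)\in\mathbb C^2:|C_1|^2+|C_2|^2=1\}$. $U(1)$ acts on $\mathbb X$ by $(A,B,C)\mapsto(A,B,e^{i\theta}C)$, commuting with the flow. The map $\Pi(A,B,C)=(A,B,h(C))$, with $h:S^3\to S^2$ the Hopf fibration, identifies $\mathbb X/U(1)$ with $\mathbb Y=\mathbb R^2\times S^2$; the reduced dynamics is the induced time-dependent vector field on $\mathbb Y$, and boundedness refers to the $\mathbb R^2$ component $(A,B)$ (the $S^2$ factor is compact). *)

theory Defs
  imports "HOL-Analysis.Analysis"
begin

definition hopf :: "complex \<Rightarrow> complex \<Rightarrow> real \<times> real \<times> real" where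
  "hopf C1 C2 = (2 * Re (cnj C1 * C2), 2 * Im (cnj C1 * C2), (cmod C1)^2 - (cmod C2)^2)"

definition Pi_red :: "real \<Rightarrow> real \<Rightarrow> complex \<Rightarrow> complex \<Rightarrow> (real \<times> real) \<times> (real \<times> real \<times> real)" where
  "Pi_red A B C1 C2 = ((A, B), hopf C1 C2)"

text \<open>(A,B,C1,C2) is a solution on [0,T] of the Maxwell--Bloch system with parameters
  Om (Omega), sg (sigma), c, hb (hbar), w1, w2 (omega_1, omega_2), p and pumping Ap;
  q = (w2 - w1) p, a(t) = q/c (A t + Ap t), j = 2 q Im(conj C1 C2); the state lies in R^2 x S^3.\<close>
definition MB_solution ::
  "real \<Rightarrow> real \<Rightarrow> real \<Rightarrow> real \<Rightarrow> real \<Rightarrow> real \<Rightarrow> real \<Rightarrow> (real \<Rightarrow> real) \<Rightarrow> real \<Rightarrow>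
   (real \<Rightarrow> real) \<Rightarrow> (real \<Rightarrow> real) \<Rightarrow> (real \<Rightarrow> complex) \<Rightarrow> (real \<Rightarrow> complex) \<Rightarrow> bool" where
  "MB_solution Om sg c hb w1 w2 p Ap T A B C1 C2 \<longleftrightarrow>
     (let q = (w2 - w1) * p;
          a = (\<lambda>t. q / c * (A t + Ap t));
          j = (\<lambda>t. 2 * q * Im (cnj (C1 t) * C2 t))
      in \<forall>t\<in>{0..T}.
           (cmod (C1 t))^2 + (cmod (C2 t))^2 = 1
         \<and> (A has_real_derivative B t) (at t within {0..T})
         \<and> (B has_real_derivative (c * j t - (Om ^ 2) * A t - sg * B t)) (at t within {0..T})
         \<and> (\<exists>d1 d2. (C1 has_vector_derivative d1) (at t within {0..T})
                  \<and> (C2 has_vector_derivative d2) (at t within {0..T})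
                  \<and> \<i> * complex_of_real hb * d1 =
                      complex_of_real (hb * w1) * C1 t + \<i> * complex_of_real (a t) * C2 t
                  \<and> \<i> * complex_of_real hb * d2 =
                      complex_of_real (hb * w2) * C2 t - \<i> * complex_of_real (a t) * C1 t))"

text \<open>Fixed points of the Poincare map U(T) of the reduced dynamics: Y# such that the reduced
  trajectory (the Pi-image of a solution of the full system) starting at Y# at time 0 is again at
  Y# at time T.\<close>
definition MB_fixed_points ::
  "real \<Rightarrow> real \<Rightarrow> real \<Rightarrow> real \<Rightarrow> real \<Rightarrow> real \<Rightarrow> real \<Rightarrow> (real \<Rightarrow> real) \<Rightarrow> real \<Rightarrow>
   ((real \<times> real) \<times> (real \<times> real \<times> real)) set" where
  "MB_fixed_points Om sg c hb w1 w2 p Ap T =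
     {Y. \<exists>A B C1 C2. MB_solution Om sg c hb w1 w2 p Ap T A B C1 C2
            \<and> Pi_red (A 0) (B 0) (C1 0) (C2 0) = Y
            \<and> Pi_red (A T) (B T) (C1 T) (C2 T) = Y}"

end

theory Submission
  imports Defs
begin

lemma left_max_deriv:
  fixes f :: "real \<Rightarrow> real"
  assumes d: "(f has_real_derivative D) (at x within {0..T})"
    and x: "0 < x" "x \<le> T" and mx: "\<forall>y\<in>{0..T}. f y \<le> f x"
  shows "0 \<le> D"
proof -
  have "(f has_real_derivative D) (at x within {0..x})"
    using d by (rule DERIV_subset) (use x in auto)
  hence lim: "((\<lambda>y. (f y - f x) / (y - x)) \<longlongrightarrow> D) (at_left x)"
    using x by (simp add: has_field_derivative_iff at_within_Icc_at_left)
  have ev: "eventually (\<lambda>y. y \<in> {0<..<x}) (at_left x)"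
    using x by (intro eventually_at_left_real) simp
  have "eventually (\<lambda>y. 0 \<le> (f y - f x) / (y - x)) (at_left x)"
    using ev
  proof (rule eventually_mono)
    fix y assume y: "y \<in> {0<..<x}"
    hence "f y \<le> f x" using mx x by auto
    thus "0 \<le> (f y - f x) / (y - x)" using y
      by (intro divide_nonpos_neg) auto
  qed
  thus ?thesis using lim by (intro tendsto_lowerbound[OF lim]) auto
qed

lemma key_ineq:
  fixes sg Om F A B f :: real
  assumes sg: "sg > 0" and Om: "Om > 0" and F: "F \<ge> 0" and f: "\<bar>f\<bar> \<le> F"
    and V: "B*B + sg*(A*B) + (Om^2 + sg^2/2)*(A*A) >
       (1 + sg + Om^2 + sg^2/2) * (F*(2+sg)/(sg * min 1 (Om^2)))^2"
  shows "- sg*(B*B + Om^2*(A*A)) + f*(2*B + sg*A) < 0"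
proof -
  define s where "s = sqrt (A^2 + B^2)"
  define m where "m = min 1 (Om^2)"
  define K where "K = 1 + sg + Om^2 + sg^2/2"
  define r0 where "r0 = F*(2+sg)/(sg * m)"
  have m: "m > 0" using Om by (simp add: m_def)
  have r0: "r0 \<ge> 0" using F sg m by (simp add: r0_def)
  have K: "K > 0" using sg by (simp add: K_def add_pos_nonneg)
  have s0: "s \<ge> 0" by (simp add: s_def)
  have ss: "s^2 = A^2 + B^2" by (simp add: s_def)
  have As: "\<bar>A\<bar> \<le> s" unfolding s_def by (rule real_le_rsqrt) simp
  have Bs: "\<bar>B\<bar> \<le> s" unfolding s_def by (rule real_le_rsqrt) simp
  have "abs (A*B) \<le> s^2" 
  proof -
    have "abs (A*B) = abs A * abs B" by (simp add: abs_mult)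
    also have "\<dots> \<le> s * s" using As Bs by (intro mult_mono) auto
    finally show ?thesis by (simp add: power2_eq_square)
  qed
  hence "B*B + sg*(A*B) + (Om^2 + sg^2/2)*(A*A) \<le> K * s^2"
  proof -
    assume h: "abs (A*B) \<le> s^2"
    have "sg*(A*B) \<le> sg * s^2" using h sg by (intro mult_left_mono) auto
    moreover have "B*B \<le> s^2" and "A*A \<le> s^2" using ss by (auto simp: power2_eq_square)
    moreover have "(Om^2 + sg^2/2)*(A*A) \<le> (Om^2 + sg^2/2)* s^2"
      using \<open>A*A \<le> s^2\<close> by (intro mult_left_mono) auto
    ultimately show ?thesis unfolding K_def by (simp add: algebra_simps)
  qed
  hence "K * r0^2 < K * s^2" using V unfolding K_def r0_def m_def by simp
  hence "r0^2 < s^2" using K by simp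
  hence sr: "r0 < s" using r0 s0 by (meson power_less_imp_less_base)
  have "f*(2*B + sg*A) \<le> F*(2+sg)* s"
  proof -
    have "f*(2*B + sg*A) \<le> abs f * abs (2*B + sg*A)" by (simp add: abs_mult[symmetric])
    also have "\<bar>2*B + sg*A\<bar> \<le> (2+sg)* s"
    proof -
      have "\<bar>2*B + sg*A\<bar> \<le> 2*\<bar>B\<bar> + sg*\<bar>A\<bar>" using sg
        by (metis abs_mult abs_of_pos abs_triangle_ineq abs_numeral)
      also have "\<dots> \<le> 2* s + sg* s" using As Bs sg by (intro add_mono mult_left_mono) auto
      finally show ?thesis by (simp add: algebra_simps)
    qed
    hence "abs f * abs (2*B + sg*A) \<le> F * ((2+sg)* s)" using f by (intro mult_mono) auto
    finally show ?thesis by simp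
  qed
  also have "F*(2+sg)* s = r0 * (sg*m) * s" using sg m by (simp add: r0_def)
  also have "\<dots> < s * (sg*m) * s"
    using sr sg m s0 r0 by (intro mult_strict_right_mono mult_strict_right_mono) auto
  also have "s * (sg*m) * s = sg * (m * s^2)" by (simp add: power2_eq_square algebra_simps)
  also have "\<dots> \<le> sg*(B*B + Om^2*(A*A))"
  proof -
    have "m * s^2 = m*(A*A) + m*(B*B)" unfolding ss by (simp add: distrib_left power2_eq_square)
    also have "\<dots> \<le> Om^2*(A*A) + 1*(B*B)" unfolding m_def
      by (intro add_mono mult_right_mono) auto
    finally show ?thesis using sg by simp
  qed
  finally show ?thesis by simp
qed

lemma core:
  fixes A B f :: "real \<Rightarrow> real" and T sg Om F :: real
  assumes T: "T > 0" and sg: "sg > 0" and Om: "Om > 0" and F: "F \<ge> 0"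
    and dA: "\<forall>t\<in>{0..T}. (A has_real_derivative B t) (at t within {0..T})"
    and dB: "\<forall>t\<in>{0..T}. (B has_real_derivative (f t - Om^2 * A t - sg * B t)) (at t within {0..T})"
    and fb: "\<forall>t\<in>{0..T}. \<bar>f t\<bar> \<le> F"
    and perA: "A T = A 0" and perB: "B T = B 0"
  shows "B 0*B 0 + sg*(A 0*B 0) + (Om^2 + sg^2/2)*(A 0*A 0) \<le>
       (1 + sg + Om^2 + sg^2/2) * (F*(2+sg)/(sg * min 1 (Om^2)))^2"
proof (rule ccontr)
  define R where "R = (1 + sg + Om^2 + sg^2/2) * (F*(2+sg)/(sg * min 1 (Om^2)))^2"
  define V where "V = (\<lambda>t. B t*B t + sg*(A t*B t) + (Om^2 + sg^2/2)*(A t*A t))"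
  assume "\<not> ?thesis"
  hence V0: "V 0 > R" by (simp add: V_def R_def)
  have dV: "(V has_real_derivative (- sg*(B t*B t + Om^2*(A t*A t)) + f t*(2*B t + sg*A t)))
      (at t within {0..T})" if t: "t \<in> {0..T}" for t
  proof -
    have a: "(A has_real_derivative B t) (at t within {0..T})" using dA t by blast
    have b: "(B has_real_derivative (f t - Om^2 * A t - sg * B t)) (at t within {0..T})" using dB t by blast
    have "(V has_real_derivative
      ((f t - Om^2 * A t - sg * B t) * B t + B t * (f t - Om^2 * A t - sg * B t))
      + sg * (B t * B t + A t * (f t - Om^2 * A t - sg * B t))
      + (Om^2 + sg^2/2) * (B t * A t + A t * B t)) (at t within {0..T})"
      unfolding V_def
      using DERIV_add[OF DERIV_add[OF DERIV_mult[OF b b] DERIV_cmult[OF DERIV_mult[OF a b], of sg]]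
         DERIV_cmult[OF DERIV_mult[OF a a], of "Om^2 + sg^2/2"]]
      by (simp add: algebra_simps)
    moreover have "((f t - Om^2 * A t - sg * B t) * B t + B t * (f t - Om^2 * A t - sg * B t))
      + sg * (B t * B t + A t * (f t - Om^2 * A t - sg * B t))
      + (Om^2 + sg^2/2) * (B t * A t + A t * B t)
      = - sg*(B t*B t + Om^2*(A t*A t)) + f t*(2*B t + sg*A t)"
      by (simp add: algebra_simps power2_eq_square)
    ultimately show ?thesis by simp
  qed
  have cont: "continuous_on {0..T} V"
    unfolding continuous_on_eq_continuous_within
    using dV DERIV_continuous by blast
  obtain tm where tm: "tm \<in> {0..T}" and mx: "\<forall>y\<in>{0..T}. V y \<le> V tm"
    using continuous_attains_sup[OF compact_Icc _ cont] T by fastforce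
  obtain x where x: "0 < x" "x \<le> T" and mxx: "\<forall>y\<in>{0..T}. V y \<le> V x"
  proof (cases "tm = 0")
    case True
    have "V T = V 0" by (simp add: V_def perA perB)
    thus ?thesis using that[of T] T mx True by auto
  next
    case False
    thus ?thesis using that[of tm] tm mx by auto
  qed
  have "V x \<ge> V 0" using mxx T by auto
  hence big: "V x > R" using V0 by simp
  have "0 \<le> - sg*(B x*B x + Om^2*(A x*A x)) + f x*(2*B x + sg*A x)"
    using left_max_deriv[OF dV x mxx] x by simp
  moreover have "- sg*(B x*B x + Om^2*(A x*A x)) + f x*(2*B x + sg*A x) < 0"
    using key_ineq[OF sg Om F, of "f x" "B x" "A x"] fb x big by (auto simp: V_def R_def)
  ultimately show False by simp
qed

lemma V_bound:
  fixes A B sg Om R :: real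
  assumes sg: "sg > 0" and Om: "Om > 0"
    and V: "B*B + sg*(A*B) + (Om^2 + sg^2/2)*(A*A) \<le> R"
  shows "\<bar>A\<bar> \<le> 1 + R/Om^2" "\<bar>B\<bar> \<le> 1 + (2*R + sg^2*R/(2*Om^2))"
proof -
  have eq: "B*B + sg*(A*B) + (Om^2 + sg^2/2)*(A*A) = (B + sg*A/2)^2 + (Om^2 + sg^2/4)*A^2"
    by (simp add: algebra_simps power2_eq_square)
  have "Om^2 * A^2 \<le> (Om^2 + sg^2/4)*A^2" by (intro mult_right_mono) auto
  also have "\<dots> \<le> R"
  proof -
    have "0 \<le> (B + sg*A/2)^2" by simp
    thus ?thesis using V eq by linarith
  qed
  finally have A2: "A^2 \<le> R/Om^2" using Om by (simp add: field_simps)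
  have "\<bar>A\<bar> \<le> 1 + A^2"
  proof -
    have "0 \<le> (\<bar>A\<bar> - 1)^2" by simp
    thus ?thesis by (simp add: power2_eq_square algebra_simps abs_mult_self_eq)
  qed
  thus "\<bar>A\<bar> \<le> 1 + R/Om^2" using A2 by simp
  have P: "(B + sg*A/2)^2 \<le> R"
  proof -
    have "0 \<le> (Om^2 + sg^2/4)*A^2" by (intro mult_nonneg_nonneg) auto
    thus ?thesis using V eq by linarith
  qed
  have "B^2 \<le> 2*(B + sg*A/2)^2 + 2*(sg*A/2)^2"
  proof -
    have "0 \<le> (B + sg*A)^2" by simp
    thus ?thesis by (simp add: algebra_simps power2_eq_square)
  qed
  also have "2*(sg*A/2)^2 = sg^2 * A^2 / 2" by (simp add: power2_eq_square)
  also have "sg^2 * A^2 / 2 \<le> sg^2 * (R/Om^2) / 2" using A2 by (intro divide_right_mono mult_left_mono) auto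
  finally have B2: "B^2 \<le> 2*R + sg^2*R/(2*Om^2)" using P by simp
  have "\<bar>B\<bar> \<le> 1 + B^2"
  proof -
    have "0 \<le> (\<bar>B\<bar> - 1)^2" by simp
    thus ?thesis by (simp add: power2_eq_square algebra_simps abs_mult_self_eq)
  qed
  thus "\<bar>B\<bar> \<le> 1 + (2*R + sg^2*R/(2*Om^2))" using B2 by simp
qed

lemma prod_half:
  fixes C1 C2 :: complex
  assumes "(cmod C1)^2 + (cmod C2)^2 = 1"
  shows "2 * (cmod C1 * cmod C2) \<le> 1"
proof -
  have "0 \<le> (cmod C1 - cmod C2)^2" by simp
  thus ?thesis using assms by (simp add: algebra_simps power2_eq_square)
qed

lemma hopf_norm:
  fixes C1 C2 :: complex
  assumes S: "(cmod C1)^2 + (cmod C2)^2 = 1"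
  shows "norm (hopf C1 C2) \<le> 3"
proof -
  have h: "2 * (cmod C1 * cmod C2) \<le> 1" by (rule prod_half[OF S])
  have n: "cmod (cnj C1 * C2) = cmod C1 * cmod C2" by (simp add: norm_mult)
  have a: "\<bar>2 * Re (cnj C1 * C2)\<bar> \<le> 1"
    using abs_Re_le_cmod[of "cnj C1 * C2"] n h by simp
  have b: "\<bar>2 * Im (cnj C1 * C2)\<bar> \<le> 1"
    using abs_Im_le_cmod[of "cnj C1 * C2"] n h by simp
  have c: "\<bar>(cmod C1)^2 - (cmod C2)^2\<bar> \<le> 1"
    using S by (simp add: abs_le_iff) (smt (verit) zero_le_power2)
  have "norm (hopf C1 C2) \<le> norm (2 * Re (cnj C1 * C2)) + norm (2 * Im (cnj C1 * C2), (cmod C1)^2 - (cmod C2)^2)"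
    unfolding hopf_def by (rule norm_Pair_le)
  also have "norm (2 * Im (cnj C1 * C2), (cmod C1)^2 - (cmod C2)^2) \<le> norm (2 * Im (cnj C1 * C2)) + norm ((cmod C1)^2 - (cmod C2)^2)"
    by (rule norm_Pair_le)
  finally show ?thesis using a b c by simp
qed

theorem lemma4p2:
  fixes Om sg c hb w1 w2 p T :: real and Ap :: "real \<Rightarrow> real"
  assumes "Om > 0" "sg > 0" "c > 0" "hb > 0" "p > 0" "w2 > w1"
    and "T > 0" "continuous_on UNIV Ap" "\<And>t. Ap (t + T) = Ap t"
  shows "bounded (MB_fixed_points Om sg c hb w1 w2 p Ap T)"
proof -
  define q where "q = (w2 - w1) * p"
  define F where "F = c * q"
  define R where "R = (1 + sg + Om^2 + sg^2/2) * (F*(2+sg)/(sg * min 1 (Om^2)))^2"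
  have q: "q > 0" using assms by (simp add: q_def)
  have F: "F \<ge> 0" using q assms by (simp add: F_def)
  have "norm Y \<le> (1 + R/Om^2) + (1 + (2*R + sg^2*R/(2*Om^2))) + 3"
    if Y: "Y \<in> MB_fixed_points Om sg c hb w1 w2 p Ap T" for Y
  proof -
    obtain A B C1 C2 where sol: "MB_solution Om sg c hb w1 w2 p Ap T A B C1 C2"
      and Y0: "Pi_red (A 0) (B 0) (C1 0) (C2 0) = Y"
      and YT: "Pi_red (A T) (B T) (C1 T) (C2 T) = Y"
      using Y unfolding MB_fixed_points_def by blast
    define f where "f = (\<lambda>t. c * (2 * q * Im (cnj (C1 t) * C2 t)))"
    have S: "\<forall>t\<in>{0..T}. (cmod (C1 t))^2 + (cmod (C2 t))^2 = 1"
      and dA: "\<forall>t\<in>{0..T}. (A has_real_derivative B t) (at t within {0..T})"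
      and dB: "\<forall>t\<in>{0..T}. (B has_real_derivative (f t - Om^2 * A t - sg * B t)) (at t within {0..T})"
      using sol unfolding MB_solution_def Let_def f_def q_def by auto
    have fb: "\<forall>t\<in>{0..T}. \<bar>f t\<bar> \<le> F"
    proof
      fix t assume t: "t \<in> {0..T}"
      have h: "2 * (cmod (C1 t) * cmod (C2 t)) \<le> 1" using prod_half S t by blast
      have "\<bar>Im (cnj (C1 t) * C2 t)\<bar> \<le> cmod (C1 t) * cmod (C2 t)"
        using abs_Im_le_cmod[of "cnj (C1 t) * C2 t"] by (simp add: norm_mult)
      hence "\<bar>2 * Im (cnj (C1 t) * C2 t)\<bar> \<le> 1" using h by simp
      hence "\<bar>q * (2 * Im (cnj (C1 t) * C2 t))\<bar> \<le> q * 1" using q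
        by (simp add: abs_mult mult_left_mono)
      hence "\<bar>c * (q * (2 * Im (cnj (C1 t) * C2 t)))\<bar> \<le> c * (q * 1)" using assms(3)
        by (simp add: abs_mult mult_left_mono)
      thus "\<bar>f t\<bar> \<le> F" by (simp add: f_def F_def mult.assoc mult.left_commute)
    qed
    have per: "A T = A 0" "B T = B 0" "hopf (C1 T) (C2 T) = hopf (C1 0) (C2 0)"
      using Y0 YT by (auto simp: Pi_red_def)
    have V: "B 0*B 0 + sg*(A 0*B 0) + (Om^2 + sg^2/2)*(A 0*A 0) \<le> R"
      unfolding R_def by (rule core[OF assms(7) assms(2) assms(1) F dA dB fb per(1,2)])
    note bd = V_bound[OF assms(2) assms(1) V]
    have hn: "norm (hopf (C1 0) (C2 0)) \<le> 3" using S assms(7) by (intro hopf_norm) auto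
    have "norm Y \<le> norm (A 0, B 0) + norm (hopf (C1 0) (C2 0))"
      using Y0[symmetric] unfolding Pi_red_def by (simp add: norm_Pair_le)
    also have "norm (A 0, B 0) \<le> norm (A 0) + norm (B 0)" by (rule norm_Pair_le)
    finally show ?thesis using bd hn by simp
  qed
  thus ?thesis unfolding bounded_iff by blast
qed

end
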